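(* Consider the closed loop defined in the context: the plant $x(k+1)=Ax(k)+Bu(k)+w(k)$; at every planning instant $k=k_pM$ the planning problem $\mathcal{P}(x(k_pM))$ is solved, giving an optimal solution with mode $i^\star$ and first planned state/input $x_p^\star(k_p|k_p),u_p^\star(k_p|k_p)$, from which the reference $x_{\text{ref}}(k_pM+j)=A^jx_p^\star(k_p|k_p)+\sum_{m=0}^{j-1}A^mBu_p^\star(k_p|k_p)$, $j=0,\dots,M$, is generated; at every time $k\in\{k_pM,\dots,k_pM+M-1\}$ the lower-layer problem $\mathcal{L}(x(k),\{x_{\text{ref}}\},i^\star,k)$ is solved and $u(k)=v^\star(k|k)$ is applied. Suppose Assumptions (A1)–(A4) hold. If the planning problem $\mathcal{P}(x(0))$ is feasible, then along the closed loop the planning problems $\mathcal{P}(x(k_pM))$ and the lower-layer problems $\mathcal{L}(x(k),\{x_{\text{ref}}\},i^\star,k)$ remain feasible for all $k_p\ge0$ and all $k\ge0$.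
   Context: System: $x(k+1)=Ax(k)+Bu(k)+w(k)$, $y(k)=Cx(k)$, with $x(k)\in\mathbb{R}^n$, $u(k)\in\mathbb{R}^m$, $y(k)\in\mathbb{R}^p$, unknown disturbance $w(k)\in\mathbb{R}^n$, closed convex constraint sets $\mathbb{X}\subseteq\mathbb{R}^n$, $\mathbb{U}\subseteq\mathbb{R}^m$. Obstacles: for $\ell=1,\dots,H$, $\mathbb{O}_\ell=\{y\in\mathbb{R}^p:E_\ell y<f_\ell\}$ (componentwise), $E_\ell\in\mathbb{R}^{q_\ell\times p}$, each the interior of a compact convex polytope; $\mathbb{O}=\bigcup_\ell\mathbb{O}_\ell$. Notation: $\mathbb{X}\oplus\mathbb{Y}=\{x+y:x\in\mathbb{X},y\in\mathbb{Y}\}$, $\mathbb{X}\ominus\mathbb{Y}=\{x:\{x\}\oplus\mathbb{Y}\subseteq\mathbb{X}\}$, $G\mathbb{S}=\{Gs:s\in\mathbb{S}\}$; $\operatorname{rem}(k,M)$ is the remainder of $k$ divided by $M$; $\|x\|_Q^2=x^\top Qx$. Modes: $N_w$ modes; for each $i$, $\mathbb{X}_i\subseteq\mathbb{X}$, $\mathbb{U}_i\subseteq\mathbb{U}$ closed convex polytopes, $\mathbb{W}_i$ compact convex polytope. (A1): if $x(k)\in\mathbb{X}_i$ and $u(k)\in\mathbb{U}_i$ then $w(k)\in\mathbb{W}_i$. $K\in\mathbb{R}^{m\times n}$ with $A+BK$ Schur stable; $\mathbb{Z}_i$ compact convex polytopes with $(A+BK)\mathbb{Z}_i\oplus\mathbb{W}_i\subseteq\mathbb{Z}_i$;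 $\mathbb{E}_i(0)=\{0\}$, $\mathbb{E}_i(j+1)=(A+BK)\mathbb{E}_i(j)\oplus\mathbb{W}_i$. $M>1$ integer, $A_p=A^M$, $B_p=\sum_{i=0}^{M-1}A^iB$. (A2): $(A,B)$ and $(A_p,B_p)$ controllable. (A3) Inter-sample sets $\mathbb{I}_i\subseteq\mathbb{R}^n\times\mathbb{R}^m$: if $(x_p,u_p)\in\mathbb{I}_i$ then for $\ell=1,\dots,M-1$: $A^\ell x_p+\sum_{m=0}^{\ell-1}A^mBu_p\in\mathbb{X}_i\ominus\mathbb{Z}_i$ and $C(A^\ell x_p+\sum_{m=0}^{\ell-1}A^mBu_p)\notin\mathbb{O}\oplus(-C)\mathbb{Z}_i$. (A4) Terminal sets $\mathbb{X}^f_i$ and maps $\kappa^f_i$: $x_p\in\mathbb{X}^f_i$ implies $A_px_p+B_p\kappa^f_i(x_p)\in\mathbb{X}^f_i$, $x_p\in\mathbb{X}_i\ominus\mathbb{Z}_i$, $\kappa^f_i(x_p)\in\mathbb{U}_i\ominus K\mathbb{Z}_i$, $(x_p,\kappa^f_i(x_p))\in\mathbb{I}_i$, $Cx_p\notin\mathbb{O}\oplus(-C)\mathbb{Z}_i$. Planning problem $\mathcal{P}(\xi)$ at planning index $k_p$, $\xi=x(k_pM)$, horizon $N$, weights $\alpha_x,\alpha_u\ge0$, goal $x_{\text{goal}}$: minimize over $x_p(k_p+j|k_p)$ ($j=0,\dots,N$), $u_p(k_p+j|k_p)$ ($j=0,\dots,N-1$), $i$ the cost $\|x_{\text{goal}}-x_p(k_p+N|k_p)\|_\infty+\sum_{j=0}^{N-1}(\alpha_x\|x_p(k_p+j|k_p)\|_\infty+\alpha_u\|u_p(k_p+j|k_p)\|_\infty)$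 subject to $i\in\{1,\dots,N_w\}$, $\xi-x_p(k_p|k_p)\in\mathbb{Z}_i$, and for all $j\in\{0,\dots,N-1\}$: $x_p(k_p+j+1|k_p)=A_px_p(k_p+j|k_p)+B_pu_p(k_p+j|k_p)$, $x_p(k_p+j|k_p)\in\mathbb{X}_i\ominus\mathbb{Z}_i$, $u_p(k_p+j|k_p)\in\mathbb{U}_i\ominus K\mathbb{Z}_i$, $Cx_p(k_p+j|k_p)\notin\mathbb{O}\oplus(-C)\mathbb{Z}_i$, $(x_p(k_p+j|k_p),u_p(k_p+j|k_p))\in\mathbb{I}_i$; and $x_p(k_p+N|k_p)\in\mathbb{X}^f_i$. Lower-layer problem $\mathcal{L}(x(k),\{x_{\text{ref}}\},i,k)$: with $L_k=M-\operatorname{rem}(k,M)$, minimize over $z(k+j|k)$ ($j=0,\dots,L_k$), $v(k+j|k)$ ($j=0,\dots,L_k-1$) the cost $\sum_{j=k}^{k+L_k-1}(\|x_{\text{ref}}(j)-z(j|k)\|_Q^2+\|v(j|k)\|_R^2)+\|x_{\text{ref}}(k+L_k)-z(k+L_k|k)\|_P^2$ ($Q,P,R$ positive definite) subject to $z(k|k)=x(k)$, $z(k+j+1|k)=Az(k+j|k)+Bv(k+j|k)$, and for the relevant $j$: $z(k+j|k)\in\mathbb{X}_i\ominus\mathbb{E}_i(j)$, $v(k+j|k)\in\mathbb{U}_i\ominus K\mathbb{E}_i(j)$, $C(z(k+j|k)-x_{\text{ref}}(k+j))\in C(\mathbb{Z}_i\ominus\mathbb{E}_i(j))$, and $z(k+L_k|k)-x_{\text{ref}}(k+L_k)\in\mathbb{Z}_i\ominus\mathbb{E}_i(L_k)$.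 Its optimal input sequence is denoted $v^\star(\cdot|k)$. *)

theory Defs
  imports "HOL-Analysis.Analysis"
begin

definition msum :: "('a::ab_group_add) set \<Rightarrow> 'a set \<Rightarrow> 'a set" where
  "msum X Y = {x + y | x y. x \<in> X \<and> y \<in> Y}"

definition pdiff :: "('a::ab_group_add) set \<Rightarrow> 'a set \<Rightarrow> 'a set" where
  "pdiff X Y = {x. msum {x} Y \<subseteq> X}"

definition mimage :: "real^'n^'m \<Rightarrow> (real^'n) set \<Rightarrow> (real^'m) set" where
  "mimage G S = {G *v s | s. s \<in> S}"

fun mpow :: "real^'n^'n \<Rightarrow> nat \<Rightarrow> real^'n^'n" where
  "mpow A 0 = mat 1"
| "mpow A (Suc k) = A ** mpow A k"

definition schur_stable :: "real^'n^'n \<Rightarrow> bool" where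
  "schur_stable A \<longleftrightarrow>
     (\<forall>(lam::complex) (v::complex^'n). v \<noteq> 0 \<and>
        (\<chi> i j. complex_of_real (A $ i $ j)) *v v = lam *s v \<longrightarrow> cmod lam < 1)"

text \<open>Kalman rank condition: rank [B, AB, ..., A^(n-1)B] = n, i.e. the columns span R^n.\<close>
definition controllable :: "real^'n^'n \<Rightarrow> real^'m^'n \<Rightarrow> bool" where
  "controllable A B \<longleftrightarrow>
     span {column j (mpow A i ** B) | i j. i < CARD('n)} = (UNIV :: (real^'n) set)"

definition sqnorm :: "real^'n^'n \<Rightarrow> real^'n \<Rightarrow> real" where
  "sqnorm Q x = x \<bullet> (Q *v x)"

definition pos_def :: "real^'n^'n \<Rightarrow> bool" where
  "pos_def Q \<longleftrightarrow> transpose Q = Q \<and> (\<forall>x. x \<noteq> 0 \<longrightarrow> sqnorm Q x > 0)"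

definition Ap :: "real^'n^'n \<Rightarrow> nat \<Rightarrow> real^'n^'n" where
  "Ap A M = mpow A M"

definition Bp :: "real^'n^'n \<Rightarrow> real^'m^'n \<Rightarrow> nat \<Rightarrow> real^'m^'n" where
  "Bp A B M = (\<Sum>i<M. mpow A i ** B)"

definition pred :: "real^'n^'n \<Rightarrow> real^'m^'n \<Rightarrow> nat \<Rightarrow> real^'n \<Rightarrow> real^'m \<Rightarrow> real^'n" where
  "pred A B l x u = mpow A l *v x + (\<Sum>m<l. mpow A m *v (B *v u))"

fun Eset :: "real^'n^'n \<Rightarrow> (real^'n) set \<Rightarrow> nat \<Rightarrow> (real^'n) set" where
  "Eset Acl W 0 = {0}"
| "Eset Acl W (Suc j) = msum (mimage Acl (Eset Acl W j)) W"

text \<open>Obstacle \<open>l\<close> has \<open>q l\<close> rows; row \<open>r\<close> of \<open>E_l\<close> is \<open>Eo l r\<close>, entry \<open>r\<close> of \<open>f_l\<close> is \<open>fo l r\<close>.\<close>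
definition obst :: "(nat \<Rightarrow> nat) \<Rightarrow> (nat \<Rightarrow> nat \<Rightarrow> real^'p) \<Rightarrow> (nat \<Rightarrow> nat \<Rightarrow> real)
                     \<Rightarrow> nat \<Rightarrow> (real^'p) set" where
  "obst q Eo fo l = {y. \<forall>r < q l. Eo l r \<bullet> y < fo l r}"

definition obstacles :: "nat \<Rightarrow> (nat \<Rightarrow> nat) \<Rightarrow> (nat \<Rightarrow> nat \<Rightarrow> real^'p) \<Rightarrow> (nat \<Rightarrow> nat \<Rightarrow> real)
                     \<Rightarrow> (real^'p) set" where
  "obstacles H q Eo fo = (\<Union>l\<in>{1..H}. obst q Eo fo l)"

definition avoids :: "(real^'p) set \<Rightarrow> real^'n^'p \<Rightarrow> (real^'n) set \<Rightarrow> real^'n \<Rightarrow> bool" where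
  "avoids Obs C Z x \<longleftrightarrow> C *v x \<notin> msum Obs (mimage (- C) Z)"

text \<open>Decision variables relative to \<open>k_p\<close>: \<open>xp j = x_p(k_p+j|k_p)\<close>, \<open>up j = u_p(k_p+j|k_p)\<close>.\<close>
definition plan_feasible ::
  "real^'n^'n \<Rightarrow> real^'m^'n \<Rightarrow> real^'n^'p \<Rightarrow> (real^'p) set \<Rightarrow> nat \<Rightarrow> nat \<Rightarrow> nat
   \<Rightarrow> (nat \<Rightarrow> (real^'n) set) \<Rightarrow> (nat \<Rightarrow> (real^'m) set) \<Rightarrow> (nat \<Rightarrow> (real^'n) set)
   \<Rightarrow> (nat \<Rightarrow> ((real^'n) \<times> (real^'m)) set) \<Rightarrow> (nat \<Rightarrow> (real^'n) set) \<Rightarrow> real^'n^'m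
   \<Rightarrow> real^'n \<Rightarrow> nat \<Rightarrow> (nat \<Rightarrow> real^'n) \<Rightarrow> (nat \<Rightarrow> real^'m) \<Rightarrow> bool" where
  "plan_feasible A B C Obs M N Nw Xs Us Zs Is Xf K \<xi> i xp up \<longleftrightarrow>
     i \<in> {1..Nw} \<and> \<xi> - xp 0 \<in> Zs i \<and>
     (\<forall>j<N. xp (Suc j) = Ap A M *v xp j + Bp A B M *v up j
          \<and> xp j \<in> pdiff (Xs i) (Zs i)
          \<and> up j \<in> pdiff (Us i) (mimage K (Zs i))
          \<and> avoids Obs C (Zs i) (xp j)
          \<and> (xp j, up j) \<in> Is i) \<and>
     xp N \<in> Xf i"

definition plan_cost ::
  "nat \<Rightarrow> real \<Rightarrow> real \<Rightarrow> real^'n \<Rightarrow> (nat \<Rightarrow> real^'n) \<Rightarrow> (nat \<Rightarrow> real^'m) \<Rightarrow> real" where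
  "plan_cost N ax au xg xp up =
     infnorm (xg - xp N) + (\<Sum>j<N. ax * infnorm (xp j) + au * infnorm (up j))"

definition plan_optimal ::
  "real^'n^'n \<Rightarrow> real^'m^'n \<Rightarrow> real^'n^'p \<Rightarrow> (real^'p) set \<Rightarrow> nat \<Rightarrow> nat \<Rightarrow> nat
   \<Rightarrow> (nat \<Rightarrow> (real^'n) set) \<Rightarrow> (nat \<Rightarrow> (real^'m) set) \<Rightarrow> (nat \<Rightarrow> (real^'n) set)
   \<Rightarrow> (nat \<Rightarrow> ((real^'n) \<times> (real^'m)) set) \<Rightarrow> (nat \<Rightarrow> (real^'n) set) \<Rightarrow> real^'n^'m
   \<Rightarrow> real \<Rightarrow> real \<Rightarrow> real^'n
   \<Rightarrow> real^'n \<Rightarrow> nat \<Rightarrow> (nat \<Rightarrow> real^'n) \<Rightarrow> (nat \<Rightarrow> real^'m) \<Rightarrow> bool" where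
  "plan_optimal A B C Obs M N Nw Xs Us Zs Is Xf K ax au xg \<xi> i xp up \<longleftrightarrow>
     plan_feasible A B C Obs M N Nw Xs Us Zs Is Xf K \<xi> i xp up \<and>
     (\<forall>i' xp' up'. plan_feasible A B C Obs M N Nw Xs Us Zs Is Xf K \<xi> i' xp' up' \<longrightarrow>
        plan_cost N ax au xg xp up \<le> plan_cost N ax au xg xp' up')"

text \<open>Decision variables relative to \<open>k\<close>: \<open>z j = z(k+j|k)\<close>, \<open>v j = v(k+j|k)\<close>;
  \<open>xr\<close> is the reference indexed by absolute time.\<close>
definition lower_feasible ::
  "real^'n^'n \<Rightarrow> real^'m^'n \<Rightarrow> real^'n^'p \<Rightarrow> real^'n^'m \<Rightarrow> nat
   \<Rightarrow> (nat \<Rightarrow> (real^'n) set) \<Rightarrow> (nat \<Rightarrow> (real^'m) set) \<Rightarrow> (nat \<Rightarrow> (real^'n) set)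
   \<Rightarrow> (nat \<Rightarrow> (real^'n) set)
   \<Rightarrow> real^'n \<Rightarrow> (nat \<Rightarrow> real^'n) \<Rightarrow> nat \<Rightarrow> nat
   \<Rightarrow> (nat \<Rightarrow> real^'n) \<Rightarrow> (nat \<Rightarrow> real^'m) \<Rightarrow> bool" where
  "lower_feasible A B C K M Xs Us Ws Zs x xr i k z v \<longleftrightarrow>
     (let L = M - k mod M; E = Eset (A + B ** K) (Ws i) in
       z 0 = x \<and>
       (\<forall>j<L. z (Suc j) = A *v z j + B *v v j
           \<and> z j \<in> pdiff (Xs i) (E j)
           \<and> v j \<in> pdiff (Us i) (mimage K (E j))
           \<and> C *v (z j - xr (k + j)) \<in> mimage C (pdiff (Zs i) (E j))) \<and>
       z L - xr (k + L) \<in> pdiff (Zs i) (E L))"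

definition lower_cost ::
  "real^'n^'n \<Rightarrow> real^'m^'m \<Rightarrow> real^'n^'n \<Rightarrow> nat \<Rightarrow> (nat \<Rightarrow> real^'n) \<Rightarrow> nat
   \<Rightarrow> (nat \<Rightarrow> real^'n) \<Rightarrow> (nat \<Rightarrow> real^'m) \<Rightarrow> real" where
  "lower_cost Q R P M xr k z v =
     (let L = M - k mod M in
       (\<Sum>j<L. sqnorm Q (xr (k + j) - z j) + sqnorm R (v j)) + sqnorm P (xr (k + L) - z L))"

definition lower_optimal ::
  "real^'n^'n \<Rightarrow> real^'m^'n \<Rightarrow> real^'n^'p \<Rightarrow> real^'n^'m \<Rightarrow> nat
   \<Rightarrow> (nat \<Rightarrow> (real^'n) set) \<Rightarrow> (nat \<Rightarrow> (real^'m) set) \<Rightarrow> (nat \<Rightarrow> (real^'n) set)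
   \<Rightarrow> (nat \<Rightarrow> (real^'n) set) \<Rightarrow> real^'n^'n \<Rightarrow> real^'m^'m \<Rightarrow> real^'n^'n
   \<Rightarrow> real^'n \<Rightarrow> (nat \<Rightarrow> real^'n) \<Rightarrow> nat \<Rightarrow> nat
   \<Rightarrow> (nat \<Rightarrow> real^'n) \<Rightarrow> (nat \<Rightarrow> real^'m) \<Rightarrow> bool" where
  "lower_optimal A B C K M Xs Us Ws Zs Q R P x xr i k z v \<longleftrightarrow>
     lower_feasible A B C K M Xs Us Ws Zs x xr i k z v \<and>
     (\<forall>z' v'. lower_feasible A B C K M Xs Us Ws Zs x xr i k z' v' \<longrightarrow>
        lower_cost Q R P M xr k z v \<le> lower_cost Q R P M xr k z' v')"

end

theory Submission
  imports Defs
begin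

lemma pdiff_iff: "x \<in> pdiff X Y \<longleftrightarrow> (\<forall>y\<in>Y. x + y \<in> X)"
  unfolding pdiff_def msum_def by auto

lemma mimage_iff: "y \<in> mimage G S \<longleftrightarrow> (\<exists>s\<in>S. y = G *v s)"
  unfolding mimage_def by auto

lemma msum_iff: "y \<in> msum X Y \<longleftrightarrow> (\<exists>a\<in>X. \<exists>b\<in>Y. y = a + b)"
  unfolding msum_def by auto

lemma Eset_Suc_iff: "y \<in> Eset Acl W (Suc j) \<longleftrightarrow> (\<exists>d\<in>Eset Acl W j. \<exists>w\<in>W. y = Acl *v d + w)"
  unfolding Eset.simps msum_def mimage_def by blast

lemma mpow_Suc_mv: "mpow A (Suc j) *v x = A *v (mpow A j *v x)"
  by (simp add: matrix_vector_mul_assoc)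

lemma mpow_0_mv: "mpow A 0 *v x = x"
  by (simp add: matrix_vector_mul_lid)

lemma Eset_shift:
  assumes "w \<in> W" "d \<in> Eset Acl W j"
  shows "d + mpow Acl j *v w \<in> Eset Acl W (Suc j)"
  using assms(2)
proof (induction j arbitrary: d)
  case 0
  then show ?case using assms(1) unfolding Eset_Suc_iff by (auto simp: matrix_vector_mul_lid)
next
  case (Suc j)
  then obtain d' w' where d': "d' \<in> Eset Acl W j" "w' \<in> W" "d = Acl *v d' + w'"
    by (auto simp: Eset_Suc_iff simp del: Eset.simps)
  have m: "d' + mpow Acl j *v w \<in> Eset Acl W (Suc j)" using Suc.IH d' by auto
  have eq: "d + mpow Acl (Suc j) *v w = Acl *v (d' + mpow Acl j *v w) + w'"
    using d' by (simp add: matrix_vector_mul_assoc matrix_vector_right_distrib algebra_simps)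
  show ?case unfolding eq
    by (rule iffD2[OF Eset_Suc_iff]) (use m d'(2) in blast)
qed

lemma Eset_inv:
  assumes inv: "\<forall>z\<in>Z. \<forall>w\<in>W. Acl *v z + w \<in> Z" and e: "e \<in> Z" and d: "d \<in> Eset Acl W j"
  shows "mpow Acl j *v e + d \<in> Z"
  using d
proof (induction j arbitrary: d)
  case 0
  then show ?case using e by (simp add: matrix_vector_mul_lid)
next
  case (Suc j)
  then obtain d' w' where d': "d' \<in> Eset Acl W j" "w' \<in> W" "d = Acl *v d' + w'"
    by (auto simp: Eset_Suc_iff simp del: Eset.simps)
  have "mpow Acl (Suc j) *v e + d = Acl *v (mpow Acl j *v e + d') + w'"
    using d' by (simp add: matrix_vector_mul_assoc matrix_vector_right_distrib algebra_simps)
  then show ?case using inv Suc.IH[OF d'(1)] d'(2) by auto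
qed

lemma sum_mv: "(\<Sum>i<(n::nat). f i) *v u = (\<Sum>i<n. f i *v u)"
  by (induction n) (auto simp: matrix_vector_mult_add_rdistrib)

lemma pred_0: "pred A B 0 x u = x"
  by (simp add: pred_def matrix_vector_mul_lid)

lemma pred_Suc: "pred A B (Suc j) x u = A *v pred A B j x u + B *v u"
proof -
  have "(\<Sum>m<Suc j. mpow A m *v (B *v u)) = B *v u + (\<Sum>m<j. A *v (mpow A m *v (B *v u)))"
    by (subst sum.lessThan_Suc_shift) (simp add: mpow_0_mv mpow_Suc_mv del: mpow.simps)
  also have "(\<Sum>m<j. A *v (mpow A m *v (B *v u))) = A *v (\<Sum>m<j. mpow A m *v (B *v u))"
    by (simp add: vec.sum)
  finally show ?thesis
    by (simp add: pred_def mpow_Suc_mv matrix_vector_right_distrib algebra_simps del: mpow.simps)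
qed

lemma pred_M: "pred A B M x u = Ap A M *v x + Bp A B M *v u"
  by (simp add: pred_def Ap_def Bp_def sum_mv matrix_vector_mul_assoc)

lemma Acl_mv: "(A + B ** K) *v y = A *v y + B *v (K *v y)"
  by (simp add: matrix_vector_mult_add_rdistrib matrix_vector_mul_assoc)

lemma start_lower:
  assumes inv: "\<forall>z\<in>Zs i. \<forall>w\<in>Ws i. (A + B ** K) *v z + w \<in> Zs i"
  and e: "x0 - xp0 \<in> Zs i"
  and xp0: "xp0 \<in> pdiff (Xs i) (Zs i)"
  and up0: "up0 \<in> pdiff (Us i) (mimage K (Zs i))"
  and a3: "\<forall>l\<in>{1..M-1}. pred A B l xp0 up0 \<in> pdiff (Xs i) (Zs i)"
  and ref: "\<forall>j\<le>M. xr (k + j) = pred A B j xp0 up0"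
  and km: "k mod M = 0"
  shows "\<exists>z v. lower_feasible A B C K M Xs Us Ws Zs x0 xr i k z v"
proof -
  define Acl where "Acl = A + B ** K"
  define e where "e = x0 - xp0"
  define E where "E = Eset Acl (Ws i)"
  define z where "z = (\<lambda>j. pred A B j xp0 up0 + mpow Acl j *v e)"
  define v where "v = (\<lambda>j. up0 + K *v (mpow Acl j *v e))"
  have key: "mpow Acl j *v e + d \<in> Zs i" if "d \<in> E j" for j d
    using Eset_inv[OF inv[folded Acl_def] e[folded e_def]] that unfolding E_def by blast
  have pj: "pred A B j xp0 up0 \<in> pdiff (Xs i) (Zs i)" if "j < M" for j
  proof (cases j)
    case 0 then show ?thesis using xp0 by (simp add: pred_0)
  next
    case (Suc n) then show ?thesis using a3 that by auto
  qed
  have z0: "z 0 = x0" by (simp add: z_def pred_0 mpow_0_mv e_def)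
  have dyn: "z (Suc j) = A *v z j + B *v v j" for j
    by (simp add: z_def v_def pred_Suc mpow_Suc_mv Acl_def[symmetric] Acl_mv[of A B K, folded Acl_def]
        matrix_vector_right_distrib algebra_simps del: mpow.simps)
  have X: "z j \<in> pdiff (Xs i) (E j)" if "j < M" for j
    unfolding pdiff_iff
  proof
    fix d assume "d \<in> E j"
    then have "mpow Acl j *v e + d \<in> Zs i" by (rule key)
    then have "pred A B j xp0 up0 + (mpow Acl j *v e + d) \<in> Xs i" using pj[OF that] by (simp add: pdiff_iff)
    then show "z j + d \<in> Xs i" by (simp add: z_def add.assoc)
  qed
  have U: "v j \<in> pdiff (Us i) (mimage K (E j))" for j
    unfolding pdiff_iff
  proof
    fix y assume "y \<in> mimage K (E j)"
    then obtain d where d: "d \<in> E j" "y = K *v d" by (auto simp: mimage_iff)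
    have "K *v (mpow Acl j *v e + d) \<in> mimage K (Zs i)" using key[OF d(1)] by (auto simp: mimage_iff)
    then have "up0 + K *v (mpow Acl j *v e + d) \<in> Us i" using up0 by (simp add: pdiff_iff)
    then show "v j + y \<in> Us i" by (simp add: v_def d(2) matrix_vector_right_distrib add.assoc)
  qed
  have ZE: "mpow Acl j *v e \<in> pdiff (Zs i) (E j)" for j
    using key by (simp add: pdiff_iff)
  have zr: "z j - xr (k + j) = mpow Acl j *v e" if "j \<le> M" for j
    using ref that by (simp add: z_def)
  have Cc: "C *v (z j - xr (k + j)) \<in> mimage C (pdiff (Zs i) (E j))" if "j < M" for j
    using zr[of j] that ZE[of j] by (auto simp: mimage_iff)
  have "lower_feasible A B C K M Xs Us Ws Zs x0 xr i k z v"
    unfolding lower_feasible_def Let_def km E_def[symmetric] Acl_def[symmetric]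
    using z0 dyn X U Cc zr[of M] ZE[of M] by simp
  then show ?thesis by blast
qed


lemma pdiff_shift:
  assumes "s \<in> pdiff Z (Eset Acl W (Suc j))" "w \<in> W"
  shows "s + mpow Acl j *v w \<in> pdiff Z (Eset Acl W j)"
  unfolding pdiff_iff
proof
  fix d assume "d \<in> Eset Acl W j"
  then have "d + mpow Acl j *v w \<in> Eset Acl W (Suc j)" using Eset_shift assms(2) by blast
  then have "s + (d + mpow Acl j *v w) \<in> Z" using assms(1) unfolding pdiff_iff by blast
  then show "s + mpow Acl j *v w + d \<in> Z" by (simp add: algebra_simps)
qed

lemma pdiff_shiftK:
  assumes "s \<in> pdiff U (mimage K (Eset Acl W (Suc j)))" "w \<in> W"
  shows "s + K *v (mpow Acl j *v w) \<in> pdiff U (mimage K (Eset Acl W j))"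
  unfolding pdiff_iff
proof
  fix y assume "y \<in> mimage K (Eset Acl W j)"
  then obtain d where d: "d \<in> Eset Acl W j" "y = K *v d" by (auto simp: mimage_iff)
  then have "d + mpow Acl j *v w \<in> Eset Acl W (Suc j)" using Eset_shift assms(2) by blast
  then have "K *v (d + mpow Acl j *v w) \<in> mimage K (Eset Acl W (Suc j))" by (auto simp: mimage_iff)
  then have "s + K *v (d + mpow Acl j *v w) \<in> U" using assms(1) unfolding pdiff_iff by blast
  then show "s + K *v (mpow Acl j *v w) + y \<in> U"
    by (simp add: d(2) matrix_vector_right_distrib algebra_simps)
qed

lemma shift_lower:
  assumes lf: "lower_feasible A B C K M Xs Us Ws Zs x0 xr i k z v"
  and km: "Suc k mod M \<noteq> 0" and M0: "M > 0"
  and w: "w \<in> Ws i"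
  and x1: "x1 = A *v x0 + B *v v 0 + w"
  shows "\<exists>z v. lower_feasible A B C K M Xs Us Ws Zs x1 xr i (Suc k) z v"
proof -
  define Acl where "Acl = A + B ** K"
  define E where "E = Eset Acl (Ws i)"
  define L' where "L' = M - Suc k mod M"
  have smod: "Suc k mod M = Suc (k mod M)" using km by (simp add: mod_Suc split: if_splits)
  have kl: "k mod M < M" using M0 by simp
  have L: "M - k mod M = Suc L'" unfolding L'_def smod using kl smod km
    by (metis Suc_diff_Suc mod_less_divisor M0)
  have z0: "z 0 = x0"
   and dyn: "\<And>j. j < Suc L' \<Longrightarrow> z (Suc j) = A *v z j + B *v v j"
   and X: "\<And>j. j < Suc L' \<Longrightarrow> z j \<in> pdiff (Xs i) (E j)"
   and U: "\<And>j. j < Suc L' \<Longrightarrow> v j \<in> pdiff (Us i) (mimage K (E j))"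
   and Cc: "\<And>j. j < Suc L' \<Longrightarrow> C *v (z j - xr (k + j)) \<in> mimage C (pdiff (Zs i) (E j))"
   and T: "z (Suc L') - xr (k + Suc L') \<in> pdiff (Zs i) (E (Suc L'))"
    using lf unfolding lower_feasible_def Let_def L E_def Acl_def by auto
  define z' where "z' = (\<lambda>j. z (Suc j) + mpow Acl j *v w)"
  define v' where "v' = (\<lambda>j. v (Suc j) + K *v (mpow Acl j *v w))"
  have z'0: "z' 0 = x1" using dyn[of 0] z0 x1 by (simp add: z'_def mpow_0_mv)
  have dyn': "z' (Suc j) = A *v z' j + B *v v' j" if "j < L'" for j
    using dyn[of "Suc j"] that
    by (simp add: z'_def v'_def mpow_Suc_mv Acl_def[symmetric] Acl_mv[of A B K, folded Acl_def]
        matrix_vector_right_distrib algebra_simps del: mpow.simps)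
  have X': "z' j \<in> pdiff (Xs i) (E j)" if "j < L'" for j
    using pdiff_shift[OF X[of "Suc j", unfolded E_def] w] that by (simp add: z'_def E_def)
  have U': "v' j \<in> pdiff (Us i) (mimage K (E j))" if "j < L'" for j
    using pdiff_shiftK[OF U[of "Suc j", unfolded E_def] w] that by (simp add: v'_def E_def)
  have C': "C *v (z' j - xr (Suc k + j)) \<in> mimage C (pdiff (Zs i) (E j))" if jl: "j < L'" for j
  proof -
    obtain s where s: "s \<in> pdiff (Zs i) (E (Suc j))" "C *v (z (Suc j) - xr (k + Suc j)) = C *v s"
      using Cc[of "Suc j"] jl by (auto simp: mimage_iff)
    have "s + mpow Acl j *v w \<in> pdiff (Zs i) (E j)"
      using pdiff_shift[OF s(1)[unfolded E_def] w] by (simp add: E_def)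
    moreover have "C *v (z' j - xr (Suc k + j)) = C *v (s + mpow Acl j *v w)"
      using s(2) by (simp add: z'_def matrix_vector_right_distrib vec.diff algebra_simps)
    ultimately show ?thesis by (auto simp: mimage_iff)
  qed
  have T': "z' L' - xr (Suc k + L') \<in> pdiff (Zs i) (E L')"
  proof -
    have "(z (Suc L') - xr (k + Suc L')) + mpow Acl L' *v w \<in> pdiff (Zs i) (E L')"
      using pdiff_shift[OF T[unfolded E_def] w] by (simp add: E_def)
    then show ?thesis by (simp add: z'_def algebra_simps)
  qed
  have "lower_feasible A B C K M Xs Us Ws Zs x1 xr i (Suc k) z' v'"
    unfolding lower_feasible_def Let_def L'_def[symmetric] E_def[symmetric] Acl_def[symmetric]
    using z'0 dyn' X' U' C' T' by simp
  then show ?thesis by blast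
qed


lemma plan_shift:
  assumes pf: "plan_feasible A B C Obs M N Nw Xs Us Zs Is Xf K \<xi> i xp up"
  and N0: "N > 0"
  and A4: "\<forall>xp\<in>Xf i. Ap A M *v xp + Bp A B M *v kf i xp \<in> Xf i
             \<and> xp \<in> pdiff (Xs i) (Zs i)
             \<and> kf i xp \<in> pdiff (Us i) (mimage K (Zs i))
             \<and> (xp, kf i xp) \<in> Is i
             \<and> avoids Obs C (Zs i) xp"
  and xi: "\<xi>' - (Ap A M *v xp 0 + Bp A B M *v up 0) \<in> Zs i"
  shows "\<exists>i xp up. plan_feasible A B C Obs M N Nw Xs Us Zs Is Xf K \<xi>' i xp up"
proof -
  have i: "i \<in> {1..Nw}" and st: "\<And>j. j < N \<Longrightarrow> xp (Suc j) = Ap A M *v xp j + Bp A B M *v up j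
          \<and> xp j \<in> pdiff (Xs i) (Zs i)
          \<and> up j \<in> pdiff (Us i) (mimage K (Zs i))
          \<and> avoids Obs C (Zs i) (xp j)
          \<and> (xp j, up j) \<in> Is i" and xf: "xp N \<in> Xf i"
    using pf unfolding plan_feasible_def by auto
  define xp' where "xp' = (\<lambda>j. if j < N then xp (Suc j) else Ap A M *v xp N + Bp A B M *v kf i (xp N))"
  define up' where "up' = (\<lambda>j. if j < N - 1 then up (Suc j) else kf i (xp N))"
  have a: "\<xi>' - xp' 0 \<in> Zs i" using xi st[OF N0] N0 by (simp add: xp'_def)
  have b: "xp' N \<in> Xf i" using A4 xf by (simp add: xp'_def)
  have c: "xp' (Suc j) = Ap A M *v xp' j + Bp A B M *v up' j
          \<and> xp' j \<in> pdiff (Xs i) (Zs i)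
          \<and> up' j \<in> pdiff (Us i) (mimage K (Zs i))
          \<and> avoids Obs C (Zs i) (xp' j)
          \<and> (xp' j, up' j) \<in> Is i" if j: "j < N" for j
    proof (cases "Suc j < N")
      case True
      then have "j < N - 1" by simp
      then show ?thesis using st[of "Suc j"] True by (simp add: xp'_def up'_def)
    next
      case False
      then have "Suc j = N" using j by simp
      then show ?thesis using A4 xf by (auto simp: xp'_def up'_def)
    qed
  have "plan_feasible A B C Obs M N Nw Xs Us Zs Is Xf K \<xi>' i xp' up'"
    unfolding plan_feasible_def using i a b c by blast
  then show ?thesis by blast
qed


lemma lower_first:
  assumes "lower_feasible A B C K M Xs Us Ws Zs x0 xr i k z v" "M > 0"
  shows "z 0 = x0 \<and> z 1 = A *v x0 + B *v v 0 \<and> x0 \<in> Xs i \<and> v 0 \<in> Us i"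
proof -
  have L: "0 < M - k mod M" using assms(2) by simp
  have z0: "z 0 = x0" and all: "\<forall>j<M - k mod M. z (Suc j) = A *v z j + B *v v j
           \<and> z j \<in> pdiff (Xs i) (Eset (A + B ** K) (Ws i) j)
           \<and> v j \<in> pdiff (Us i) (mimage K (Eset (A + B ** K) (Ws i) j))
           \<and> C *v (z j - xr (k + j)) \<in> mimage C (pdiff (Zs i) (Eset (A + B ** K) (Ws i) j))"
    using assms(1) unfolding lower_feasible_def Let_def by auto
  have "z 0 = x0" "z (Suc 0) = A *v z 0 + B *v v 0" "z 0 \<in> pdiff (Xs i) {0}"
       "v 0 \<in> pdiff (Us i) (mimage K {0})"
    using z0 all[rule_format, OF L] by auto
  then show ?thesis by (auto simp: pdiff_iff mimage_iff)
qed

lemma lower_last: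
  assumes "lower_feasible A B C K M Xs Us Ws Zs x0 xr i k z v" "M > 0" "Suc k mod M = 0"
  shows "z 1 - xr (Suc k) \<in> pdiff (Zs i) (Eset (A + B ** K) (Ws i) 1)"
proof -
  have "k mod M = M - 1" using assms(2,3) by (metis One_nat_def Suc_pred diff_Suc_1 mod_Suc nat.distinct(1))
  then have L: "M - k mod M = 1" using assms(2) by simp
  have "z (M - k mod M) - xr (k + (M - k mod M)) \<in> pdiff (Zs i) (Eset (A + B ** K) (Ws i) (M - k mod M))"
    using assms(1) unfolding lower_feasible_def Let_def by blast
  then show ?thesis unfolding L by simp
qed

lemma mod_facts:
  assumes "(M::nat) > 0"
  shows "Suc k mod M \<noteq> 0 \<Longrightarrow> Suc k div M = k div M"
    and "Suc k mod M = 0 \<Longrightarrow> Suc k = Suc (k div M) * M"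
    and "Suc k mod M = 0 \<Longrightarrow> Suc k div M = Suc (k div M)"
    and "kp * M div M = kp"
    and "kp * M mod M = 0"
proof -
  show "Suc k mod M \<noteq> 0 \<Longrightarrow> Suc k div M = k div M"
    using assms by (metis div_Suc)
  show "Suc k mod M = 0 \<Longrightarrow> Suc k div M = Suc (k div M)"
    using assms by (metis div_Suc)
  then show "Suc k mod M = 0 \<Longrightarrow> Suc k = Suc (k div M) * M"
    by (metis div_mult_mod_eq add_0_right)
  show "kp * M div M = kp" "kp * M mod M = 0" using assms by auto
qed


theorem proposition3:
  fixes A :: "real^'n^'n" and B :: "real^'m^'n" and C :: "real^'n^'p" and K :: "real^'n^'m"
    and X :: "(real^'n) set" and U :: "(real^'m) set"
    and H :: nat and q :: "nat \<Rightarrow> nat" and Eo :: "nat \<Rightarrow> nat \<Rightarrow> real^'p" and fo :: "nat \<Rightarrow> nat \<Rightarrow> real"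
    and Nw :: nat and Xs Ws Zs Xf :: "nat \<Rightarrow> (real^'n) set" and Us :: "nat \<Rightarrow> (real^'m) set"
    and Is :: "nat \<Rightarrow> ((real^'n) \<times> (real^'m)) set" and kf :: "nat \<Rightarrow> real^'n \<Rightarrow> real^'m"
    and M N :: nat and ax au :: real and xg :: "real^'n"
    and Q P :: "real^'n^'n" and R :: "real^'m^'m"
    and x w :: "nat \<Rightarrow> real^'n" and u :: "nat \<Rightarrow> real^'m"
    and ist :: "nat \<Rightarrow> nat" and xps :: "nat \<Rightarrow> nat \<Rightarrow> real^'n" and ups :: "nat \<Rightarrow> nat \<Rightarrow> real^'m"
    and xr :: "nat \<Rightarrow> nat \<Rightarrow> real^'n"
    and zs :: "nat \<Rightarrow> nat \<Rightarrow> real^'n" and vs :: "nat \<Rightarrow> nat \<Rightarrow> real^'m"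
  defines "Obs \<equiv> obstacles H q Eo fo"
  assumes XU: "closed X" "convex X" "closed U" "convex U"
    and obst_poly: "\<forall>l\<in>{1..H}. \<exists>S. polytope S \<and> obst q Eo fo l = interior S"
    and modes: "\<forall>i\<in>{1..Nw}. Xs i \<subseteq> X \<and> polyhedron (Xs i) \<and> Us i \<subseteq> U \<and> polyhedron (Us i)
                   \<and> polytope (Ws i) \<and> polytope (Zs i)
                   \<and> msum (mimage (A + B ** K) (Zs i)) (Ws i) \<subseteq> Zs i"
    and stab: "schur_stable (A + B ** K)"
    and M_gt: "M > 1" and N_pos: "N > 0" and weights: "ax \<ge> 0" "au \<ge> 0"
    and QRP: "pos_def Q" "pos_def R" "pos_def P"
    \<comment> \<open>(A1)\<close>
    and A1: "\<forall>i\<in>{1..Nw}. \<forall>k. x k \<in> Xs i \<and> u k \<in> Us i \<longrightarrow> w k \<in> Ws i"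
    \<comment> \<open>(A2)\<close>
    and A2: "controllable A B" "controllable (Ap A M) (Bp A B M)"
    \<comment> \<open>(A3)\<close>
    and A3: "\<forall>i\<in>{1..Nw}. \<forall>xp up. (xp, up) \<in> Is i \<longrightarrow>
               (\<forall>l\<in>{1..M-1}. pred A B l xp up \<in> pdiff (Xs i) (Zs i)
                              \<and> avoids Obs C (Zs i) (pred A B l xp up))"
    \<comment> \<open>(A4)\<close>
    and A4: "\<forall>i\<in>{1..Nw}. \<forall>xp\<in>Xf i.
               Ap A M *v xp + Bp A B M *v kf i xp \<in> Xf i
             \<and> xp \<in> pdiff (Xs i) (Zs i)
             \<and> kf i xp \<in> pdiff (Us i) (mimage K (Zs i))
             \<and> (xp, kf i xp) \<in> Is i
             \<and> avoids Obs C (Zs i) xp"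
    \<comment> \<open>closed loop: plant\<close>
    and plant: "\<forall>k. x (Suc k) = A *v x k + B *v u k + w k"
    \<comment> \<open>closed loop: planning layer (optimal solution whenever the problem is feasible)\<close>
    and planning: "\<forall>kp. (\<exists>i xp up. plan_feasible A B C Obs M N Nw Xs Us Zs Is Xf K (x (kp * M)) i xp up)
                     \<longrightarrow> plan_optimal A B C Obs M N Nw Xs Us Zs Is Xf K ax au xg (x (kp * M))
                            (ist kp) (xps kp) (ups kp)"
    \<comment> \<open>closed loop: reference generation\<close>
    and reference: "\<forall>kp j. j \<le> M \<longrightarrow> xr kp (kp * M + j) = pred A B j (xps kp 0) (ups kp 0)"
    \<comment> \<open>closed loop: lower layer (optimal solution whenever feasible, first input applied)\<close>
    and lower: "\<forall>k. (\<exists>z v. lower_feasible A B C K M Xs Us Ws Zs (x k) (xr (k div M)) (ist (k div M)) k z v)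
                  \<longrightarrow> lower_optimal A B C K M Xs Us Ws Zs Q R P (x k) (xr (k div M)) (ist (k div M)) k
                         (zs k) (vs k)
                      \<and> u k = vs k 0"
    \<comment> \<open>initial feasibility\<close>
    and init: "\<exists>i xp up. plan_feasible A B C Obs M N Nw Xs Us Zs Is Xf K (x 0) i xp up"
  shows "(\<forall>kp. \<exists>i xp up. plan_feasible A B C Obs M N Nw Xs Us Zs Is Xf K (x (kp * M)) i xp up)
       \<and> (\<forall>k. \<exists>z v. lower_feasible A B C K M Xs Us Ws Zs (x k) (xr (k div M)) (ist (k div M)) k z v)"
proof -
  have M0: "M > 0" using M_gt by simp
  have inv: "\<forall>z\<in>Zs i. \<forall>w\<in>Ws i. (A + B ** K) *v z + w \<in> Zs i" if "i \<in> {1..Nw}" for i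
  proof (intro ballI)
    fix z w assume "z \<in> Zs i" "w \<in> Ws i"
    then have "(A + B ** K) *v z + w \<in> msum (mimage (A + B ** K) (Zs i)) (Ws i)"
      unfolding msum_def mimage_def by blast
    then show "(A + B ** K) *v z + w \<in> Zs i" using modes that by blast
  qed
  have optf: "plan_feasible A B C Obs M N Nw Xs Us Zs Is Xf K (x (kp * M)) (ist kp) (xps kp) (ups kp)"
    if "\<exists>i xp up. plan_feasible A B C Obs M N Nw Xs Us Zs Is Xf K (x (kp * M)) i xp up" for kp
    using planning that unfolding plan_optimal_def by blast
  have PL: "\<exists>z v. lower_feasible A B C K M Xs Us Ws Zs (x (kp * M)) (xr kp) (ist kp) (kp * M) z v"
    if pf0: "\<exists>i xp up. plan_feasible A B C Obs M N Nw Xs Us Zs Is Xf K (x (kp * M)) i xp up" for kp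
  proof -
    note pf = optf[OF pf0]
    have i: "ist kp \<in> {1..Nw}" using pf unfolding plan_feasible_def by blast
    have e: "x (kp * M) - xps kp 0 \<in> Zs (ist kp)" using pf unfolding plan_feasible_def by blast
    have st0: "xps kp 0 \<in> pdiff (Xs (ist kp)) (Zs (ist kp)) \<and> ups kp 0 \<in> pdiff (Us (ist kp)) (mimage K (Zs (ist kp)))
       \<and> (xps kp 0, ups kp 0) \<in> Is (ist kp)"
      using pf N_pos unfolding plan_feasible_def by blast
    have a3: "\<forall>l\<in>{1..M-1}. pred A B l (xps kp 0) (ups kp 0) \<in> pdiff (Xs (ist kp)) (Zs (ist kp))"
      using A3 i st0 by blast
    have ref: "\<forall>j\<le>M. xr kp (kp * M + j) = pred A B j (xps kp 0) (ups kp 0)"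
      using reference by blast
    show ?thesis
      by (rule start_lower[where Zs=Zs and Xs=Xs and Us=Us and M=M and C=C and i="ist kp" and Ws=Ws and A=A and B=B and K=K and xr="xr kp" and k="kp*M", OF inv[OF i] e conjunct1[OF st0] conjunct1[OF conjunct2[OF st0]] a3 ref
            mod_facts(5)[OF M0, of kp]])
  qed
  have S: "(\<exists>i xp up. plan_feasible A B C Obs M N Nw Xs Us Zs Is Xf K (x (k div M * M)) i xp up)
      \<and> (\<exists>z v. lower_feasible A B C K M Xs Us Ws Zs (x k) (xr (k div M)) (ist (k div M)) k z v)" for k
  proof (induction k)
    case 0
    have "\<exists>i xp up. plan_feasible A B C Obs M N Nw Xs Us Zs Is Xf K (x (0 * M)) i xp up"
      using init by simp
    from PL[OF this] this show ?case by simp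
  next
    case (Suc k)
    define kp where "kp = k div M"
    have pfe: "\<exists>i xp up. plan_feasible A B C Obs M N Nw Xs Us Zs Is Xf K (x (kp * M)) i xp up"
      using Suc.IH kp_def by blast
    note pf = optf[OF pfe]
    define i where "i = ist kp"
    have i: "i \<in> {1..Nw}" using pf unfolding plan_feasible_def i_def by blast
    have lfe: "\<exists>z v. lower_feasible A B C K M Xs Us Ws Zs (x k) (xr kp) i k z v"
      using Suc.IH kp_def i_def by blast
    have lo: "lower_optimal A B C K M Xs Us Ws Zs Q R P (x k) (xr kp) i k (zs k) (vs k) \<and> u k = vs k 0"
      using lower lfe kp_def i_def by blast
    then have lf: "lower_feasible A B C K M Xs Us Ws Zs (x k) (xr kp) i k (zs k) (vs k)" and uk: "u k = vs k 0"
      unfolding lower_optimal_def by auto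
    note lf1 = lower_first[OF lf M0]
    have wk: "w k \<in> Ws i" using A1 i lf1 uk by metis
    have x1: "x (Suc k) = A *v x k + B *v vs k 0 + w k" using plant uk by simp
    show ?case
    proof (cases "Suc k mod M = 0")
      case False
      have d: "Suc k div M = kp" using mod_facts(1)[OF M0 False] kp_def by simp
      have "\<exists>z v. lower_feasible A B C K M Xs Us Ws Zs (x (Suc k)) (xr kp) i (Suc k) z v"
        by (rule shift_lower[OF lf False M0 wk x1])
      then show ?thesis using pfe d i_def by simp
    next
      case True
      have d: "Suc k div M = Suc kp" using mod_facts(3)[OF M0 True] kp_def by simp
      have sk: "Suc k = Suc kp * M" using mod_facts(2)[OF M0 True] kp_def by simp
      have T: "zs k 1 - xr kp (Suc k) \<in> pdiff (Zs i) (Eset (A + B ** K) (Ws i) 1)"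
        by (rule lower_last[OF lf M0 True])
      have "(A + B ** K) *v 0 + w k \<in> Eset (A + B ** K) (Ws i) (Suc 0)" using wk
        unfolding Eset.simps msum_def mimage_def by blast
      then have "w k \<in> Eset (A + B ** K) (Ws i) 1" by simp
      then have "zs k 1 - xr kp (Suc k) + w k \<in> Zs i" using T by (auto simp: pdiff_iff)
      moreover have "xr kp (Suc k) = Ap A M *v xps kp 0 + Bp A B M *v ups kp 0"
        using reference sk pred_M by (metis add.commute le_refl mult_Suc)
      ultimately have xi: "x (Suc kp * M) - (Ap A M *v xps kp 0 + Bp A B M *v ups kp 0) \<in> Zs i"
        using x1 lf1 sk by (simp add: algebra_simps)
      have pf': "\<exists>i xp up. plan_feasible A B C Obs M N Nw Xs Us Zs Is Xf K (x (Suc kp * M)) i xp up"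
        by (rule plan_shift[where kf=kf and i=i, OF pf[folded i_def] N_pos bspec[OF A4 i] xi])
      have "\<exists>z v. lower_feasible A B C K M Xs Us Ws Zs (x (Suc kp * M)) (xr (Suc kp)) (ist (Suc kp)) (Suc kp * M) z v"
        by (rule PL[OF pf'])
      then show ?thesis using pf' d sk by simp
    qed
  qed
  show ?thesis
  proof (intro conjI allI)
    fix kp show "\<exists>i xp up. plan_feasible A B C Obs M N Nw Xs Us Zs Is Xf K (x (kp * M)) i xp up"
      using conjunct1[OF S[of "kp * M"]] mod_facts(4)[OF M0] by simp
  next
    fix k show "\<exists>z v. lower_feasible A B C K M Xs Us Ws Zs (x k) (xr (k div M)) (ist (k div M)) k z v"
      using S by blast
  qed
qed

end
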